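(* Let $t_0=\{\mathit{MH}\}$ be a trait consisting of a single abstract method header, let $t_1=\{\mathit{Ms}_1\},\dots,t_n=\{\mathit{Ms}_n\}$ be traits, and let $C=t_0+\dots+t_n$ be a class declaration, in a program of the trait calculus described in the context. If $t_0,\dots,t_n$ are well-typed (i.e. $\mathit{Ds};t_i\vdash\mathit{Ds}(t_i):\mathit{OK}$) and the declarations $t_0=\{\mathit{MH}\},t_1=\{\mathit{Ms}_1\},\dots,t_n=\{\mathit{Ms}_n\},C=t_0+\dots+t_n$ flatten to $t_0=\{\mathit{MH}\},t_1=\{\mathit{Ms}_1\},\dots,t_n=\{\mathit{Ms}_n\},C=\mathit{Body}$, then $C=\mathit{Body}$ is well-typed, i.e. $\mathit{Body}$ satisfies the typing-and-verification judgment $\vdash\mathit{Body}:\mathit{OK}$ under name $C$ in the flattened program.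
   Context: Trait calculus (\textsc{TraitCbC}). A program is a list $\mathit{Ds}$ of declarations $\mathit{Name}=E$ (names unique, no circular trait definitions), where $\mathit{Name}$ is a trait name $t$ or class name $C$, and $E::=\mathit{Body}\mid t\mid E+E\mid E[\mathtt{makeAbstract}\ m]$. A body is $\{\mathtt{interface}?\ [\mathit{Cs}]\ \mathit{Ms}\}$ with implemented interfaces $\mathit{Cs}$ and methods $\mathit{Ms}$ with distinct names. A method is $\mathit{MH}\ e?;$ (abstract if $e$ absent) with header $S\ \mathtt{method}\ C\ m(C_1x_1\dots C_nx_n)$; $S$ has precondition $\mathit{Pre}(S)$ and postcondition $\mathit{Post}(S)$ in a parametric logic supporting a commutative, associative conjunction $\&$ and transitive implication $\Rightarrow$. Expressions: $e::=x\mid e.m(e_1\dots e_n)\mid\mathtt{new}\ C(e_1\dots e_n)$; fields are emulated by argument-less abstract methods (getters). The underlying verification is assumed sound and modular. Typing judgment $\Gamma\vdash e:C\dashv P\models P'$ (knowledge $P$, obligation $P'$): variables give $\Gamma\vdash x:\Gamma(x)\dashv\mathtt{result}:\Gamma(x)\&\mathtt{result}=x\models\mathit{true}$; a call $e_0.m(e_1\dots e_n)$ to a method $S\ \mathtt{method}\ C\ m(C_1x_1\dots C_nx_n)$ of $C_0$, with $\Gamma\vdash e_i:C_i\dashv P_i\models P'_i$, fresh $x'_i$ and $S'=S[\mathtt{this}:=x'_0,x_i:=x'_i]$, has type $C$, knowledge $\mathtt{result}:C\&P_0[\mathtt{result}:=x'_0]\&\dots\&P_n[\mathtt{result}:=x'_n]\&(\mathit{Pre}(S')\Rightarrow\mathit{Post}(S'))$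 and obligation $P'_0\&\dots\&P'_n\&\mathit{Pre}(S')$; $\mathtt{new}\ C(e_1\dots e_n)$, with getters $S_i\ \mathtt{method}\ C_i\ x_i()$ of $C$, has type $C$, knowledge $\mathtt{result}:C\&\bigwedge_i(P_i[\mathtt{result}:=x'_i]\&(\mathit{Pre}(S'_i)\Rightarrow\mathtt{result}.x_i()=x'_i))$ and obligation $\bigwedge_iP'_i\&\bigwedge_i\mathit{Pre}(S'_i)$, $S'_i=S_i[\mathtt{this}:=\mathtt{result}]$; subsumption to supertypes. A concrete method $S\ \mathtt{method}\ C\ m(C_1x_1\dots C_nx_n)\ e;$ satisfies $\mathit{Ds};\mathit{Name}\vdash M:\mathit{OK}$ iff, for $\Gamma=\mathtt{this}:\mathit{Name},x_i:C_i$, $\Gamma\vdash e:C\dashv P\models P'$ and the verifier proves $\mathit{Ds}\vdash(\Gamma\&\mathit{Pre}(S)\&P)\models(P'\&\mathit{Post}(S))$; abstract methods are always OK; a body is OK (well-typed) iff all its methods are. Body composition $\{[\mathit{Cs}_1]\mathit{Ms}_1\}+\{[\mathit{Cs}_2]\mathit{Ms}_2\}=\{[\mathit{Cs}_1\cup\mathit{Cs}_2]\mathit{Ms}_1+\mathit{Ms}_2\}$: methods present in only one list are kept; a concrete method (spec $S$) plus an abstract one (spec $S'$) with the same name yields the concrete one if $\mathit{Pre}(S')\Rightarrow\mathit{Pre}(S)$ and $\mathit{Post}(S)\Rightarrow\mathit{Post}(S')$; two abstract methods yield the one with the stronger specification in this sense (the first if it qualifies); otherwise (e.g. two concrete methods)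 composition is undefined. Flattening: $D_1\dots D_n$ flattens to $D'_1\dots D'_n$ if $D'_1\dots D'_n\vdash D_i\Downarrow D'_i$ for all $i$. $\mathit{Ds}\vdash\mathit{Name}=E\Downarrow\mathit{Name}=\mathit{Body}$ if $\mathit{Ds};\mathit{Name}\vdash E\Downarrow\mathit{Body}$ and, when $\mathit{Name}$ is a class, all abstract methods of $\mathit{Body}$ are argument-less getters. Trait expressions flatten as: a body flattens to itself extended by the headers of the interface methods of $\mathit{Cs}$ not already present, provided the result is OK; $t\Downarrow\mathit{Ds}(t)$; $E_1+E_2\Downarrow\mathit{Body}_1+\mathit{Body}_2$ if $E_i\Downarrow\mathit{Body}_i$; $E[\mathtt{makeAbstract}\ m]\Downarrow\mathit{Body}[\mathtt{makeAbstract}\ m]$ (implementation of $m$ removed) if $E\Downarrow\mathit{Body}$. *)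

theory Defs
  imports Main
begin

type_synonym cname = string
type_synonym tname = string
type_synonym mname = string
type_synonym vname = string

datatype name = CN cname | TN tname

text \<open>Variables: this, the special result variable of the logic, ordinary variables.\<close>
datatype var = This | Result | Var vname

datatype expr = EVar var | ECall expr mname "expr list" | ENew cname "expr list"

text \<open>Specifications S (over an arbitrary type 'f of formulas of the parametric logic).\<close>
datatype 'f spec = Spec (pre: 'f) (post: 'f)

text \<open>Method header  S method C m(C1 x1 ... Cn xn)\<close>
datatype 'f mheader =
  MHdr (hspec: "'f spec") (hret: cname) (hname: mname) (hparams: "(cname \<times> vname) list")

text \<open>Method  MH e? ;  (abstract iff the implementation is None)\<close>
datatype 'f meth = Meth (mhdr: "'f mheader") (mimpl: "expr option")

text \<open>Body  { interface? [Cs] Ms }\<close>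
datatype 'f body = Body (bintf: bool) (bintfs: "cname list") (bmeths: "'f meth list")

datatype 'f texpr =
    TBody "'f body"
  | TRef tname
  | TPlus "'f texpr" "'f texpr"
  | TMakeAbstract "'f texpr" mname

type_synonym 'f decl = "name \<times> 'f texpr"
type_synonym 'f prog = "'f decl list"

text \<open>
  A parametric logic: formulas of type 'f with truth, conjunction, implication,
  type assertions (x : Name), equalities (x = y), getter equalities (x.m() = y),
  variable substitution, the logical implication judgement (Ds \<turnstile> P \<Rightarrow> Q)
  and the verifier judgement  Ds \<turnstile> P \<Turnstile> Q.\<close>
record 'f logic =
  ftrue :: 'f
  fand  :: "'f \<Rightarrow> 'f \<Rightarrow> 'f"
  fimp  :: "'f \<Rightarrow> 'f \<Rightarrow> 'f"
  fhas  :: "var \<Rightarrow> name \<Rightarrow> 'f"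
  feq   :: "var \<Rightarrow> var \<Rightarrow> 'f"
  fget  :: "var \<Rightarrow> mname \<Rightarrow> var \<Rightarrow> 'f"
  fren  :: "(var \<Rightarrow> var) \<Rightarrow> 'f \<Rightarrow> 'f"
  fent  :: "'f prog \<Rightarrow> 'f \<Rightarrow> 'f \<Rightarrow> bool"
  fver  :: "'f prog \<Rightarrow> 'f \<Rightarrow> 'f \<Rightarrow> bool"

definition conjs :: "'f logic \<Rightarrow> 'f list \<Rightarrow> 'f" where
  "conjs L Ps = foldr (fand L) Ps (ftrue L)"

definition subst1 :: "var \<Rightarrow> var \<Rightarrow> var \<Rightarrow> var" where
  "subst1 x y = (\<lambda>v. if v = x then y else v)"

definition mnm :: "'f meth \<Rightarrow> mname" where "mnm M = hname (mhdr M)"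
definition mspec :: "'f meth \<Rightarrow> 'f spec" where "mspec M = hspec (mhdr M)"
definition msig :: "'f meth \<Rightarrow> cname \<times> mname \<times> (cname \<times> vname) list" where
  "msig M = (hret (mhdr M), hname (mhdr M), hparams (mhdr M))"

definition body_of :: "'f prog \<Rightarrow> name \<Rightarrow> 'f body option" where
  "body_of Ds N = (case map_of Ds N of Some (TBody B) \<Rightarrow> Some B | _ \<Rightarrow> None)"

definition methods_of :: "'f prog \<Rightarrow> name \<Rightarrow> 'f meth list" where
  "methods_of Ds N = (case body_of Ds N of Some B \<Rightarrow> bmeths B | None \<Rightarrow> [])"

definition mlookup :: "'f prog \<Rightarrow> name \<Rightarrow> mname \<Rightarrow> 'f meth option" where
  "mlookup Ds N m = find (\<lambda>M. mnm M = m) (methods_of Ds N)"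

definition direct_super :: "'f prog \<Rightarrow> name \<Rightarrow> name \<Rightarrow> bool" where
  "direct_super Ds N N' = (\<exists>B. body_of Ds N = Some B \<and> N' \<in> CN ` set (bintfs B))"

definition subtype :: "'f prog \<Rightarrow> name \<Rightarrow> name \<Rightarrow> bool" where
  "subtype Ds = (direct_super Ds)\<^sup>*\<^sup>*"

definition getters :: "'f prog \<Rightarrow> cname \<Rightarrow> 'f meth list" where
  "getters Ds c = filter (\<lambda>M. mimpl M = None \<and> hparams (mhdr M) = []) (methods_of Ds (CN c))"

definition fresh :: "(var \<times> name) list \<Rightarrow> var list \<Rightarrow> bool" where
  "fresh \<Gamma> ys = (distinct ys \<and> (\<forall>y\<in>set ys. y \<noteq> This \<and> y \<noteq> Result \<and> y \<notin> fst ` set \<Gamma>))"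

text \<open>The substitution  [this := x0, x_i := x'_i].\<close>
definition argsub :: "var \<Rightarrow> (cname \<times> vname) list \<Rightarrow> var list \<Rightarrow> var \<Rightarrow> var" where
  "argsub x0 ps xs v = (if v = This then x0 else
     (case map_of (zip (map (\<lambda>p. Var (snd p)) ps) xs) v of Some y \<Rightarrow> y | None \<Rightarrow> v))"

inductive tyj :: "'f logic \<Rightarrow> 'f prog \<Rightarrow> (var \<times> name) list \<Rightarrow> expr \<Rightarrow> name \<Rightarrow> 'f \<Rightarrow> 'f \<Rightarrow> bool"
  for L :: "'f logic" and Ds :: "'f prog"
where
  TVar: "map_of \<Gamma> x = Some N \<Longrightarrow>
    tyj L Ds \<Gamma> (EVar x) N (fand L (fhas L Result N) (feq L Result x)) (ftrue L)"
| TCall: "\<lbrakk> tyj L Ds \<Gamma> e0 N0 P0 Q0;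
    mlookup Ds N0 m = Some M; mhdr M = MHdr S c m ps;
    length es = length ps; length Ps = length ps; length Qs = length ps; length xs = length ps;
    \<forall>i<length ps. tyj L Ds \<Gamma> (es ! i) (CN (fst (ps ! i))) (Ps ! i) (Qs ! i);
    fresh \<Gamma> (x0 # xs) \<rbrakk> \<Longrightarrow>
    tyj L Ds \<Gamma> (ECall e0 m es) (CN c)
      (conjs L ([fhas L Result (CN c), fren L (subst1 Result x0) P0]
                @ map (\<lambda>i. fren L (subst1 Result (xs ! i)) (Ps ! i)) [0..<length ps]
                @ [fimp L (fren L (argsub x0 ps xs) (pre S)) (fren L (argsub x0 ps xs) (post S))]))
      (conjs L ([Q0] @ Qs @ [fren L (argsub x0 ps xs) (pre S)]))"
| TNew: "\<lbrakk> body_of Ds (CN c) = Some B; \<not> bintf B; gs = getters Ds c;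
    length es = length gs; length Ps = length gs; length Qs = length gs; length xs = length gs;
    \<forall>i<length gs. tyj L Ds \<Gamma> (es ! i) (CN (hret (mhdr (gs ! i)))) (Ps ! i) (Qs ! i);
    fresh \<Gamma> xs \<rbrakk> \<Longrightarrow>
    tyj L Ds \<Gamma> (ENew c es) (CN c)
      (conjs L (fhas L Result (CN c) #
         map (\<lambda>i. fand L (fren L (subst1 Result (xs ! i)) (Ps ! i))
                    (fimp L (fren L (subst1 This Result) (pre (mspec (gs ! i))))
                            (fget L Result (mnm (gs ! i)) (xs ! i)))) [0..<length gs]))
      (conjs L (Qs @ map (\<lambda>g. fren L (subst1 This Result) (pre (mspec g))) gs))"
| TSub: "\<lbrakk> tyj L Ds \<Gamma> e N P Q; subtype Ds N N' \<rbrakk> \<Longrightarrow> tyj L Ds \<Gamma> e N' P Q"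

definition gamma_of :: "name \<Rightarrow> 'f mheader \<Rightarrow> (var \<times> name) list" where
  "gamma_of N h = (This, N) # map (\<lambda>(c, x). (Var x, CN c)) (hparams h)"

definition meth_ok :: "'f logic \<Rightarrow> 'f prog \<Rightarrow> name \<Rightarrow> 'f meth \<Rightarrow> bool" where
  "meth_ok L Ds N M = (case mimpl M of
      None \<Rightarrow> True
    | Some e \<Rightarrow> (let h = mhdr M; \<Gamma> = gamma_of N h in
        \<exists>P Q. tyj L Ds \<Gamma> e (CN (hret h)) P Q \<and>
          fver L Ds (fand L (conjs L (map (\<lambda>(x, n). fhas L x n) \<Gamma>)) (fand L (pre (hspec h)) P))
                    (fand L Q (post (hspec h)))))"

definition body_ok :: "'f logic \<Rightarrow> 'f prog \<Rightarrow> name \<Rightarrow> 'f body \<Rightarrow> bool" where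
  "body_ok L Ds N B = (\<forall>M\<in>set (bmeths B). meth_ok L Ds N M)"

definition stronger :: "'f logic \<Rightarrow> 'f prog \<Rightarrow> 'f spec \<Rightarrow> 'f spec \<Rightarrow> bool" where
  "stronger L Ds S S' = (fent L Ds (pre S') (pre S) \<and> fent L Ds (post S) (post S'))"

definition comb :: "'f logic \<Rightarrow> 'f prog \<Rightarrow> 'f meth \<Rightarrow> 'f meth \<Rightarrow> 'f meth option" where
  "comb L Ds M1 M2 = (if msig M1 \<noteq> msig M2 then None else
     (case (mimpl M1, mimpl M2) of
        (Some _, None) \<Rightarrow> (if stronger L Ds (mspec M1) (mspec M2) then Some M1 else None)
      | (None, Some _) \<Rightarrow> (if stronger L Ds (mspec M2) (mspec M1) then Some M2 else None)
      | (None, None) \<Rightarrow> (if stronger L Ds (mspec M1) (mspec M2) then Some M1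
                         else if stronger L Ds (mspec M2) (mspec M1) then Some M2 else None)
      | (Some _, Some _) \<Rightarrow> None))"

definition comp_ms :: "'f logic \<Rightarrow> 'f prog \<Rightarrow> 'f meth list \<Rightarrow> 'f meth list \<Rightarrow> 'f meth list option" where
  "comp_ms L Ds Ms1 Ms2 =
     (case those (map (\<lambda>M. case find (\<lambda>M2. mnm M2 = mnm M) Ms2 of
                               None \<Rightarrow> Some M
                             | Some M2 \<Rightarrow> comb L Ds M M2) Ms1) of
        None \<Rightarrow> None
      | Some Ms \<Rightarrow> Some (Ms @ filter (\<lambda>M. mnm M \<notin> set (map mnm Ms1)) Ms2))"

definition comp_body :: "'f logic \<Rightarrow> 'f prog \<Rightarrow> 'f body \<Rightarrow> 'f body \<Rightarrow> 'f body option" where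
  "comp_body L Ds B1 B2 = (if bintf B1 \<or> bintf B2 then None else
     map_option (Body False (remdups (bintfs B1 @ bintfs B2))) (comp_ms L Ds (bmeths B1) (bmeths B2)))"

definition make_abstract :: "mname \<Rightarrow> 'f body \<Rightarrow> 'f body" where
  "make_abstract m B = Body (bintf B) (bintfs B)
     (map (\<lambda>M. if mnm M = m then Meth (mhdr M) None else M) (bmeths B))"

definition intf_meths :: "'f prog \<Rightarrow> cname list \<Rightarrow> 'f meth list option" where
  "intf_meths Ds Cs = map_option concat (those (map (\<lambda>c. case body_of Ds (CN c) of
       Some B \<Rightarrow> (if bintf B then Some (bmeths B) else None) | None \<Rightarrow> None) Cs))"

fun add_hdrs :: "'f meth list \<Rightarrow> 'f meth list \<Rightarrow> 'f meth list" where
  "add_hdrs Ms [] = Ms"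
| "add_hdrs Ms (M # rest) = (if mnm M \<in> set (map mnm Ms) then add_hdrs Ms rest
                             else add_hdrs (Ms @ [Meth (mhdr M) None]) rest)"

fun flat_e :: "'f logic \<Rightarrow> 'f prog \<Rightarrow> name \<Rightarrow> 'f texpr \<Rightarrow> 'f body option" where
  "flat_e L Ds N (TBody B) = (case intf_meths Ds (bintfs B) of
       None \<Rightarrow> None
     | Some IMs \<Rightarrow> (let B' = Body (bintf B) (bintfs B) (add_hdrs (bmeths B) IMs) in
                    if body_ok L Ds N B' then Some B' else None))"
| "flat_e L Ds N (TRef t) = body_of Ds (TN t)"
| "flat_e L Ds N (TPlus E1 E2) = (case (flat_e L Ds N E1, flat_e L Ds N E2) of
       (Some B1, Some B2) \<Rightarrow> comp_body L Ds B1 B2 | _ \<Rightarrow> None)"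
| "flat_e L Ds N (TMakeAbstract E m) = map_option (make_abstract m) (flat_e L Ds N E)"

definition flat_decl :: "'f logic \<Rightarrow> 'f prog \<Rightarrow> 'f decl \<Rightarrow> 'f decl \<Rightarrow> bool" where
  "flat_decl L Ds' D D' = (fst D' = fst D \<and>
     (\<exists>B. flat_e L Ds' (fst D) (snd D) = Some B \<and> snd D' = TBody B \<and>
          ((\<exists>c. fst D = CN c) \<and> \<not> bintf B \<longrightarrow>
             (\<forall>M\<in>set (bmeths B). mimpl M = None \<longrightarrow> hparams (mhdr M) = []))))"

definition flattens :: "'f logic \<Rightarrow> 'f prog \<Rightarrow> 'f prog \<Rightarrow> bool" where
  "flattens L Ds Ds' = list_all2 (flat_decl L Ds') Ds Ds'"

fun texpr_bodies :: "'f texpr \<Rightarrow> 'f body list" where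
  "texpr_bodies (TBody B) = [B]"
| "texpr_bodies (TRef t) = []"
| "texpr_bodies (TPlus E1 E2) = texpr_bodies E1 @ texpr_bodies E2"
| "texpr_bodies (TMakeAbstract E m) = texpr_bodies E"

fun texpr_refs :: "'f texpr \<Rightarrow> tname list" where
  "texpr_refs (TBody B) = []"
| "texpr_refs (TRef t) = [t]"
| "texpr_refs (TPlus E1 E2) = texpr_refs E1 @ texpr_refs E2"
| "texpr_refs (TMakeAbstract E m) = texpr_refs E"

definition trait_dep :: "'f prog \<Rightarrow> tname \<Rightarrow> tname \<Rightarrow> bool" where
  "trait_dep Ds t t' = (\<exists>E. map_of Ds (TN t) = Some E \<and> t' \<in> set (texpr_refs E))"

definition wf_prog :: "'f prog \<Rightarrow> bool" where
  "wf_prog Ds = (distinct (map fst Ds)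
     \<and> (\<forall>D\<in>set Ds. \<forall>B\<in>set (texpr_bodies (snd D)). distinct (map mnm (bmeths B)))
     \<and> (\<forall>t. \<not> (trait_dep Ds)\<^sup>+\<^sup>+ t t))"

definition refines :: "'f logic \<Rightarrow> 'f prog \<Rightarrow> name \<Rightarrow> name \<Rightarrow> bool" where
  "refines L Ds N N' =
     ((\<forall>M\<in>set (methods_of Ds N'). \<exists>M'. mlookup Ds N (mnm M) = Some M' \<and> msig M' = msig M \<and>
          stronger L Ds (mspec M') (mspec M))
      \<and> (\<forall>N''. direct_super Ds N' N'' \<longrightarrow> subtype Ds N N''))"

definition trait_logic :: "'f logic \<Rightarrow> bool" where
  "trait_logic L = (
     \<comment> \<open>conjunction is commutative and associative\<close>
     (\<forall>P Q. fand L P Q = fand L Q P)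
   \<and> (\<forall>P Q R. fand L (fand L P Q) R = fand L P (fand L Q R))
     \<comment> \<open>logical implication is reflexive and transitive, with the usual rules\<close>
   \<and> (\<forall>Ds P. fent L Ds P P)
   \<and> (\<forall>Ds P Q R. fent L Ds P Q \<longrightarrow> fent L Ds Q R \<longrightarrow> fent L Ds P R)
   \<and> (\<forall>Ds P. fent L Ds P (ftrue L))
   \<and> (\<forall>Ds P Q. fent L Ds (fand L P Q) P)
   \<and> (\<forall>Ds P Q R. fent L Ds R P \<longrightarrow> fent L Ds R Q \<longrightarrow> fent L Ds R (fand L P Q))
   \<and> (\<forall>Ds P P' Q Q'. fent L Ds P' P \<longrightarrow> fent L Ds Q Q' \<longrightarrow> fent L Ds (fimp L P Q) (fimp L P' Q'))
     \<comment> \<open>substitution\<close>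
   \<and> (\<forall>Ds \<sigma> P Q. fent L Ds P Q \<longrightarrow> fent L Ds (fren L \<sigma> P) (fren L \<sigma> Q))
   \<and> (\<forall>\<sigma>. fren L \<sigma> (ftrue L) = ftrue L)
   \<and> (\<forall>\<sigma> P Q. fren L \<sigma> (fand L P Q) = fand L (fren L \<sigma> P) (fren L \<sigma> Q))
   \<and> (\<forall>\<sigma> P Q. fren L \<sigma> (fimp L P Q) = fimp L (fren L \<sigma> P) (fren L \<sigma> Q))
   \<and> (\<forall>\<sigma> x N. fren L \<sigma> (fhas L x N) = fhas L (\<sigma> x) N)
   \<and> (\<forall>\<sigma> x y. fren L \<sigma> (feq L x y) = feq L (\<sigma> x) (\<sigma> y))
   \<and> (\<forall>\<sigma> x m y. fren L \<sigma> (fget L x m y) = fget L (\<sigma> x) m (\<sigma> y))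
     \<comment> \<open>modularity: a type assertion only conveys the offered method contracts\<close>
   \<and> (\<forall>Ds N N' x. refines L Ds N N' \<longrightarrow> fent L Ds (fhas L x N) (fhas L x N'))
     \<comment> \<open>the verifier is closed under logical consequence\<close>
   \<and> (\<forall>Ds A A' B B'. fver L Ds A B \<longrightarrow> fent L Ds A' A \<longrightarrow> fent L Ds B B' \<longrightarrow> fver L Ds A' B'))"

end

theory Submission
  imports Defs
begin

lemma those_Some: "those xs = Some ys \<Longrightarrow> list_all2 (\<lambda>x y. x = Some y) xs ys"
proof (induction xs arbitrary: ys)
  case Nil thus ?case by simp
next
  case (Cons a xs) thus ?case by (auto split: option.splits)
qed

lemma la_ex: "list_all2 P xs ys \<Longrightarrow> x \<in> set xs \<Longrightarrow> \<exists>y\<in>set ys. P x y"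
  by (induction rule: list_all2_induct) auto

lemma find_mem: "find P xs = Some x \<Longrightarrow> x \<in> set xs \<and> P x"
  by (auto simp: find_Some_iff)

lemma find_distinct:
  assumes "distinct (map mnm xs)" "M \<in> set xs"
  shows "find (\<lambda>M'. mnm M' = mnm M) xs = Some M"
  using assms by (induction xs) (auto)

context
  fixes L :: "'f logic" and Ds :: "'f prog"
  assumes logic: "trait_logic L"
begin

lemma ent_refl: "fent L Ds P P" using logic unfolding trait_logic_def by metis
lemma ent_trans: "fent L Ds P Q \<Longrightarrow> fent L Ds Q R \<Longrightarrow> fent L Ds P R"
  using logic unfolding trait_logic_def by metis
lemma ent_and1: "fent L Ds (fand L P Q) P" using logic unfolding trait_logic_def by metis
lemma ent_and2: "fent L Ds (fand L P Q) Q"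
proof -
  have "fand L P Q = fand L Q P" using logic unfolding trait_logic_def by metis
  thus ?thesis using ent_and1 by metis
qed
lemma ent_andI: "fent L Ds R P \<Longrightarrow> fent L Ds R Q \<Longrightarrow> fent L Ds R (fand L P Q)"
  using logic unfolding trait_logic_def by metis
lemma ent_and_mono: "fent L Ds A A' \<Longrightarrow> fent L Ds B B' \<Longrightarrow> fent L Ds (fand L A B) (fand L A' B')"
  by (meson ent_andI ent_and1 ent_and2 ent_trans)
lemma ent_imp_mono: "fent L Ds P' P \<Longrightarrow> fent L Ds Q Q' \<Longrightarrow> fent L Ds (fimp L P Q) (fimp L P' Q')"
  using logic unfolding trait_logic_def by metis
lemma ent_ren: "fent L Ds P Q \<Longrightarrow> fent L Ds (fren L \<sigma> P) (fren L \<sigma> Q)"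
  using logic unfolding trait_logic_def by metis
lemma ent_refines: "refines L Ds N N' \<Longrightarrow> fent L Ds (fhas L x N) (fhas L x N')"
  using logic unfolding trait_logic_def by metis
lemma ver_mono: "fver L Ds A B \<Longrightarrow> fent L Ds A' A \<Longrightarrow> fent L Ds B B' \<Longrightarrow> fver L Ds A' B'"
  using logic unfolding trait_logic_def by metis

lemma conjs_mono: "list_all2 (fent L Ds) As As' \<Longrightarrow> fent L Ds (conjs L As) (conjs L As')"
proof (induction As As' rule: list_all2_induct)
  case Nil thus ?case by (simp add: ent_refl)
next
  case (Cons x xs y ys) thus ?case by (simp add: conjs_def ent_and_mono)
qed

lemma stronger_refl: "stronger L Ds S S" by (simp add: stronger_def ent_refl)
lemma stronger_trans: "stronger L Ds S1 S2 \<Longrightarrow> stronger L Ds S2 S3 \<Longrightarrow> stronger L Ds S1 S3"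
  unfolding stronger_def by (meson ent_trans)

lemma msig_mnm: "msig M' = msig M \<Longrightarrow> mnm M' = mnm M"
  by (simp add: msig_def mnm_def)

lemma comb_props:
  assumes "comb L Ds M1 M2 = Some R"
  shows "msig R = msig M1 \<and> msig R = msig M2 \<and> (R = M1 \<or> R = M2)
     \<and> stronger L Ds (mspec R) (mspec M1) \<and> stronger L Ds (mspec R) (mspec M2)"
  using assms stronger_refl
  by (auto simp: comb_def split: option.splits if_splits)

lemma comp_ms_props:
  assumes cm: "comp_ms L Ds Ms1 Ms2 = Some Ms"
    and d1: "distinct (map mnm Ms1)" and d2: "distinct (map mnm Ms2)"
  shows "distinct (map mnm Ms) \<and> set Ms \<subseteq> set Ms1 \<union> set Ms2
    \<and> (\<forall>M\<in>set Ms1 \<union> set Ms2. \<exists>M'\<in>set Ms. msig M' = msig M \<and> stronger L Ds (mspec M') (mspec M))"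
proof -
  define f where "f = (\<lambda>M. case find (\<lambda>M2. mnm M2 = mnm M) Ms2 of
                               None \<Rightarrow> Some M
                             | Some M2 \<Rightarrow> comb L Ds M M2)"
  from cm obtain Rs where th: "those (map f Ms1) = Some Rs"
    and Ms: "Ms = Rs @ filter (\<lambda>M. mnm M \<notin> set (map mnm Ms1)) Ms2"
    unfolding comp_ms_def f_def by (auto split: option.splits)
  have la: "list_all2 (\<lambda>x y. f x = Some y) Ms1 Rs"
    using those_Some[OF th] by (simp add: list_all2_map1)
  have fprop: "msig R = msig M \<and> (R = M \<or> R \<in> set Ms2) \<and> stronger L Ds (mspec R) (mspec M)"
    if "f M = Some R" for M R
  proof (cases "find (\<lambda>M2. mnm M2 = mnm M) Ms2")
    case None thus ?thesis using that stronger_refl by (simp add: f_def)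
  next
    case (Some M2)
    hence "comb L Ds M M2 = Some R" "M2 \<in> set Ms2" using that find_mem[OF Some] by (auto simp: f_def)
    thus ?thesis using comb_props[of M M2 R] by auto
  qed
  have names: "map mnm Rs = map mnm Ms1"
    using la by (induction rule: list_all2_induct) (auto dest!: fprop msig_mnm)
  have dist: "distinct (map mnm Ms)"
    using d1 d2 names unfolding Ms by (auto simp: distinct_map_filter) (metis imageI)
  have sub: "set Ms \<subseteq> set Ms1 \<union> set Ms2"
  proof -
    have "set Rs \<subseteq> set Ms1 \<union> set Ms2"
      using la by (induction rule: list_all2_induct) (auto dest!: fprop)
    thus ?thesis unfolding Ms by auto
  qed
  have c1: "\<exists>M'\<in>set Ms. msig M' = msig M \<and> stronger L Ds (mspec M') (mspec M)" if "M \<in> set Ms1" for M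
  proof -
    from la_ex[OF la that] obtain R where "R \<in> set Rs" "f M = Some R"
      by auto
    thus ?thesis using fprop unfolding Ms by auto
  qed
  have c2: "\<exists>M'\<in>set Ms. msig M' = msig M \<and> stronger L Ds (mspec M') (mspec M)" if M2: "M \<in> set Ms2" for M
  proof (cases "mnm M \<in> set (map mnm Ms1)")
    case False thus ?thesis using that stronger_refl unfolding Ms by auto
  next
    case True
    then obtain M1 where M1: "M1 \<in> set Ms1" "mnm M1 = mnm M" by auto
    from la_ex[OF la M1(1)] obtain R where R: "R \<in> set Rs" "f M1 = Some R"
      by auto
    have "find (\<lambda>M2. mnm M2 = mnm M1) Ms2 = Some M"
      using find_distinct[OF d2 M2] M1(2) by simp
    hence "comb L Ds M1 M = Some R" using R(2) by (simp add: f_def)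
    thus ?thesis using comb_props[of M1 M R] R(1) unfolding Ms by auto
  qed
  show ?thesis using dist sub c1 c2 by blast
qed

lemma fold_inv:
  assumes bod: "\<forall>x\<in>set (t0#xs). \<exists>Ms. body_of Ds (TN x) = Some (Body False [] Ms) \<and> distinct (map mnm Ms)"
    and fl: "flat_e L Ds N (foldl TPlus (TRef t0) (map TRef xs)) = Some B"
  shows "\<not> bintf B \<and> bintfs B = [] \<and> distinct (map mnm (bmeths B))
    \<and> set (bmeths B) \<subseteq> (\<Union>x\<in>set (t0#xs). set (methods_of Ds (TN x)))
    \<and> (\<forall>x\<in>set (t0#xs). \<forall>M\<in>set (methods_of Ds (TN x)). \<exists>M'\<in>set (bmeths B).
          msig M' = msig M \<and> stronger L Ds (mspec M') (mspec M))"
  using bod fl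
proof (induction xs arbitrary: B rule: rev_induct)
  case Nil
  then obtain Ms where "body_of Ds (TN t0) = Some (Body False [] Ms)" "distinct (map mnm Ms)" by auto
  thus ?case using Nil stronger_refl by (auto simp: methods_of_def)
next
  case (snoc x xs)
  from snoc.prems(2) obtain B1 where B1: "flat_e L Ds N (foldl TPlus (TRef t0) (map TRef xs)) = Some B1"
    and c: "comp_body L Ds B1 (the (body_of Ds (TN x))) = Some B"
    by (auto split: option.splits)
  obtain Ms where Ms: "body_of Ds (TN x) = Some (Body False [] Ms)" "distinct (map mnm Ms)"
    using snoc.prems(1) by auto
  have IH: "\<not> bintf B1 \<and> bintfs B1 = [] \<and> distinct (map mnm (bmeths B1))
    \<and> set (bmeths B1) \<subseteq> (\<Union>x\<in>set (t0#xs). set (methods_of Ds (TN x)))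
    \<and> (\<forall>x\<in>set (t0#xs). \<forall>M\<in>set (methods_of Ds (TN x)). \<exists>M'\<in>set (bmeths B1).
          msig M' = msig M \<and> stronger L Ds (mspec M') (mspec M))"
    using snoc.IH[OF _ B1] snoc.prems(1) by auto
  from c Ms IH obtain Ms' where cm: "comp_ms L Ds (bmeths B1) Ms = Some Ms'" and B: "B = Body False [] Ms'"
    by (auto simp: comp_body_def)
  have P: "distinct (map mnm Ms') \<and> set Ms' \<subseteq> set (bmeths B1) \<union> set Ms
    \<and> (\<forall>M\<in>set (bmeths B1) \<union> set Ms. \<exists>M'\<in>set Ms'. msig M' = msig M \<and> stronger L Ds (mspec M') (mspec M))"
    using comp_ms_props[OF cm] IH Ms(2) by blast
  have mx: "methods_of Ds (TN x) = Ms" using Ms by (simp add: methods_of_def)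
  show ?case
  proof (intro conjI)
    show "\<not> bintf B" "bintfs B = []" "distinct (map mnm (bmeths B))" using B P by auto
    show "set (bmeths B) \<subseteq> (\<Union>x\<in>set (t0#xs@[x]). set (methods_of Ds (TN x)))"
      using B P IH mx by auto
    show "\<forall>y\<in>set (t0#xs@[x]). \<forall>M\<in>set (methods_of Ds (TN y)). \<exists>M'\<in>set (bmeths B).
          msig M' = msig M \<and> stronger L Ds (mspec M') (mspec M)"
    proof (intro ballI)
      fix y M assume y: "y \<in> set (t0#xs@[x])" and M: "M \<in> set (methods_of Ds (TN y))"
      show "\<exists>M'\<in>set (bmeths B). msig M' = msig M \<and> stronger L Ds (mspec M') (mspec M)"
      proof (cases "y \<in> set (t0#xs)")
        case True
        then obtain M1 where M1: "M1 \<in> set (bmeths B1)" "msig M1 = msig M" "stronger L Ds (mspec M1) (mspec M)"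
          using IH M by blast
        then obtain M' where "M' \<in> set Ms'" "msig M' = msig M1" "stronger L Ds (mspec M') (mspec M1)"
          using P by blast
        thus ?thesis using M1 B stronger_trans by auto
      next
        case False
        hence "y = x" using y by auto
        thus ?thesis using M mx P B by auto
      qed
    qed
  qed
qed
end


lemma choice_list: "\<forall>i<n. \<exists>x. P i x \<Longrightarrow> \<exists>xs. length xs = n \<and> (\<forall>i<n. P i (xs!i))"
  by (rule exI[of _ "map (\<lambda>i. SOME x. P i x) [0..<n]"]) (auto intro: someI_ex)

context
  fixes L :: "'f logic" and Ds :: "'f prog" and C t Ms
  assumes logic: "trait_logic L"
    and ref: "refines L Ds (CN C) (TN t)"
    and bt: "body_of Ds (TN t) = Some (Body False [] Ms)"
begin

lemma sub_from: "subtype Ds (TN t) N' \<Longrightarrow> N' = TN t"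
  unfolding subtype_def
  by (erule converse_rtranclpE) (auto simp: direct_super_def bt)

lemma sub_to: "subtype Ds N (TN t) \<Longrightarrow> N = TN t"
  unfolding subtype_def
  by (erule rtranclp.cases) (auto simp: direct_super_def)

lemma tyj_transfer:
  "tyj L Ds \<Gamma> e N P Q \<Longrightarrow> \<Gamma> = (This, TN t) # rest \<Longrightarrow> TN t \<notin> snd ` set rest \<Longrightarrow>
   \<exists>P' Q'. tyj L Ds ((This, CN C) # rest) e (if N = TN t then CN C else N) P' Q'
      \<and> fent L Ds P' P \<and> fent L Ds Q Q'"
proof (induction rule: tyj.induct)
  case (TVar \<Gamma> x N)
  show ?case
  proof (cases "x = This")
    case True
    hence "N = TN t" using TVar by simp
    moreover have "fent L Ds (fand L (fhas L Result (CN C)) (feq L Result x))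
                              (fand L (fhas L Result (TN t)) (feq L Result x))"
      using ent_and_mono[OF logic ent_refines[OF logic ref] ent_refl[OF logic]] .
    moreover have "tyj L Ds ((This, CN C) # rest) (EVar x) (CN C)
        (fand L (fhas L Result (CN C)) (feq L Result x)) (ftrue L)"
      using True by (intro tyj.TVar) simp
    ultimately show ?thesis using ent_refl[OF logic] by auto
  next
    case False
    hence m: "map_of rest x = Some N" using TVar by simp
    hence "N \<noteq> TN t" using TVar.prems(2) by (force dest: map_of_SomeD)
    moreover have "tyj L Ds ((This, CN C) # rest) (EVar x) N
        (fand L (fhas L Result N) (feq L Result x)) (ftrue L)"
      using False m by (intro tyj.TVar) simp
    ultimately show ?thesis using ent_refl[OF logic] by auto
  qed
next
  case (TSub \<Gamma> e N P Q N')
  then obtain P' Q' where h: "tyj L Ds ((This, CN C) # rest) e (if N = TN t then CN C else N) P' Q'"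
    "fent L Ds P' P" "fent L Ds Q Q'" by blast
  show ?case
  proof (cases "N = TN t")
    case True
    hence "N' = TN t" using sub_from TSub.hyps(2) by simp
    thus ?thesis using h True by auto
  next
    case False
    hence "N' \<noteq> TN t" using sub_to TSub.hyps(2) by blast
    have "tyj L Ds ((This, CN C) # rest) e N' P' Q'" using h(1) False tyj.TSub[OF _ TSub.hyps(2)] by simp
    thus ?thesis using h(2,3) \<open>N' \<noteq> TN t\<close> by auto
  qed
next
  case (TCall \<Gamma> e0 N0 P0 Q0 m M S c ps es Ps Qs xs x0)
  let ?\<Gamma>' = "(This, CN C) # rest"
  let ?\<sigma> = "\<lambda>N. if N = TN t then CN C else N"
  obtain P0' Q0' where h0: "tyj L Ds ?\<Gamma>' e0 (?\<sigma> N0) P0' Q0'" "fent L Ds P0' P0" "fent L Ds Q0 Q0'"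
    using TCall.IH TCall.prems by blast
  have "\<forall>i<length ps. \<exists>PQ. tyj L Ds ?\<Gamma>' (es ! i) (CN (fst (ps ! i))) (fst PQ) (snd PQ)
      \<and> fent L Ds (fst PQ) (Ps ! i) \<and> fent L Ds (Qs ! i) (snd PQ)"
  proof (intro allI impI)
    fix i assume i: "i < length ps"
    have "tyj L Ds \<Gamma> (es ! i) (CN (fst (ps ! i))) (Ps ! i) (Qs ! i) \<and>
      (\<Gamma> = (This, TN t) # rest \<longrightarrow> TN t \<notin> snd ` set rest \<longrightarrow>
       (\<exists>P' Q'. tyj L Ds ?\<Gamma>' (es ! i) (if CN (fst (ps ! i)) = TN t then CN C else CN (fst (ps ! i))) P' Q'
      \<and> fent L Ds P' (Ps ! i) \<and> fent L Ds (Qs ! i) Q'))"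
      using TCall i by blast
    thus "\<exists>PQ. tyj L Ds ?\<Gamma>' (es ! i) (CN (fst (ps ! i))) (fst PQ) (snd PQ)
      \<and> fent L Ds (fst PQ) (Ps ! i) \<and> fent L Ds (Qs ! i) (snd PQ)"
      using TCall.prems by fastforce
  qed
  then obtain PQs where PQs: "length PQs = length ps" "\<forall>i<length ps. tyj L Ds ?\<Gamma>' (es ! i) (CN (fst (ps ! i))) (fst (PQs!i)) (snd (PQs!i))
      \<and> fent L Ds (fst (PQs!i)) (Ps ! i) \<and> fent L Ds (Qs ! i) (snd (PQs!i))"
    using choice_list[where P = "\<lambda>i PQ. tyj L Ds ?\<Gamma>' (es ! i) (CN (fst (ps ! i))) (fst PQ) (snd PQ)
      \<and> fent L Ds (fst PQ) (Ps ! i) \<and> fent L Ds (Qs ! i) (snd PQ)"] by blast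
  define Ps' where "Ps' = map fst PQs"
  define Qs' where "Qs' = map snd PQs"
  have es': "\<forall>i<length ps. tyj L Ds ?\<Gamma>' (es ! i) (CN (fst (ps ! i))) (Ps'!i) (Qs'!i)
      \<and> fent L Ds (Ps'!i) (Ps ! i) \<and> fent L Ds (Qs ! i) (Qs'!i)"
    using PQs by (simp add: Ps'_def Qs'_def)
  have lens: "length Ps' = length ps" "length Qs' = length ps" using PQs(1) by (auto simp: Ps'_def Qs'_def)
  obtain M' S' where M': "mlookup Ds (?\<sigma> N0) m = Some M'" "mhdr M' = MHdr S' c m ps"
     "fent L Ds (pre S) (pre S')" "fent L Ds (post S') (post S)"
  proof (cases "N0 = TN t")
    case True
    have "M \<in> set (methods_of Ds (TN t))" "mnm M = m"
      using find_mem[of _ _ M] TCall.hyps(2) True by (auto simp: mlookup_def)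
    then obtain M' where "mlookup Ds (CN C) m = Some M'" "msig M' = msig M"
        "stronger L Ds (mspec M') (mspec M)"
      using ref unfolding refines_def by blast
    moreover obtain S' c' m' ps' where "mhdr M' = MHdr S' c' m' ps'" by (cases "mhdr M'")
    ultimately show ?thesis using that True TCall.hyps(3)
      by (auto simp: msig_def stronger_def mspec_def)
  next
    case False
    thus ?thesis using that TCall.hyps(2,3) ent_refl[OF logic] by auto
  qed
  have fr: "fresh ?\<Gamma>' (x0 # xs)" using TCall.hyps(8) TCall.prems(1) by (simp add: fresh_def)
  let ?a = "argsub x0 ps xs"
  have T: "tyj L Ds ?\<Gamma>' (ECall e0 m es) (CN c)
      (conjs L ([fhas L Result (CN c), fren L (subst1 Result x0) P0']
                @ map (\<lambda>i. fren L (subst1 Result (xs ! i)) (Ps' ! i)) [0..<length ps]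
                @ [fimp L (fren L ?a (pre S')) (fren L ?a (post S'))]))
      (conjs L ([Q0'] @ Qs' @ [fren L ?a (pre S')]))"
    by (rule tyj.TCall[OF h0(1) M'(1) M'(2) TCall.hyps(4) lens TCall.hyps(7)]) (use es' fr in auto)
  have E1: "fent L Ds (conjs L ([fhas L Result (CN c), fren L (subst1 Result x0) P0']
                @ map (\<lambda>i. fren L (subst1 Result (xs ! i)) (Ps' ! i)) [0..<length ps]
                @ [fimp L (fren L ?a (pre S')) (fren L ?a (post S'))]))
       (conjs L ([fhas L Result (CN c), fren L (subst1 Result x0) P0]
                @ map (\<lambda>i. fren L (subst1 Result (xs ! i)) (Ps ! i)) [0..<length ps]
                @ [fimp L (fren L ?a (pre S)) (fren L ?a (post S))]))"
    apply (rule conjs_mono[OF logic])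
    apply (intro list_all2_appendI)
      apply (simp add: ent_refl[OF logic] ent_ren[OF logic] h0(2))
     apply (simp add: list_all2_map1 list_all2_map2 list_all2_same ent_ren[OF logic] es')
    apply (simp add: ent_imp_mono[OF logic] ent_ren[OF logic] M'(3,4))
    done
  have E2: "fent L Ds (conjs L ([Q0] @ Qs @ [fren L ?a (pre S)])) (conjs L ([Q0'] @ Qs' @ [fren L ?a (pre S')]))"
    apply (rule conjs_mono[OF logic])
    apply (intro list_all2_appendI)
      apply (simp add: h0(3))
     apply (simp add: list_all2_conv_all_nth lens TCall.hyps(6) es')
    apply (simp add: ent_ren[OF logic] M'(3))
    done
  show ?case using T E1 E2 by auto
next
  case (TNew c B gs es Ps Qs xs \<Gamma>)
  let ?\<Gamma>' = "(This, CN C) # rest"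
  have "\<forall>i<length gs. \<exists>PQ. tyj L Ds ?\<Gamma>' (es ! i) (CN (hret (mhdr (gs ! i)))) (fst PQ) (snd PQ)
      \<and> fent L Ds (fst PQ) (Ps ! i) \<and> fent L Ds (Qs ! i) (snd PQ)"
  proof (intro allI impI)
    fix i assume i: "i < length gs"
    have "tyj L Ds \<Gamma> (es ! i) (CN (hret (mhdr (gs ! i)))) (Ps ! i) (Qs ! i) \<and>
      (\<Gamma> = (This, TN t) # rest \<longrightarrow> TN t \<notin> snd ` set rest \<longrightarrow>
       (\<exists>P' Q'. tyj L Ds ?\<Gamma>' (es ! i) (if CN (hret (mhdr (gs ! i))) = TN t then CN C else CN (hret (mhdr (gs ! i)))) P' Q'
      \<and> fent L Ds P' (Ps ! i) \<and> fent L Ds (Qs ! i) Q'))"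
      using TNew i by blast
    thus "\<exists>PQ. tyj L Ds ?\<Gamma>' (es ! i) (CN (hret (mhdr (gs ! i)))) (fst PQ) (snd PQ)
      \<and> fent L Ds (fst PQ) (Ps ! i) \<and> fent L Ds (Qs ! i) (snd PQ)"
      using TNew.prems by fastforce
  qed
  then obtain PQs where PQs: "length PQs = length gs" "\<forall>i<length gs. tyj L Ds ?\<Gamma>' (es ! i) (CN (hret (mhdr (gs ! i)))) (fst (PQs!i)) (snd (PQs!i))
      \<and> fent L Ds (fst (PQs!i)) (Ps ! i) \<and> fent L Ds (Qs ! i) (snd (PQs!i))"
    using choice_list[where P = "\<lambda>i PQ. tyj L Ds ?\<Gamma>' (es ! i) (CN (hret (mhdr (gs ! i)))) (fst PQ) (snd PQ)
      \<and> fent L Ds (fst PQ) (Ps ! i) \<and> fent L Ds (Qs ! i) (snd PQ)"] by blast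
  define Ps' where "Ps' = map fst PQs"
  define Qs' where "Qs' = map snd PQs"
  have es': "\<forall>i<length gs. tyj L Ds ?\<Gamma>' (es ! i) (CN (hret (mhdr (gs ! i)))) (Ps'!i) (Qs'!i)
      \<and> fent L Ds (Ps'!i) (Ps ! i) \<and> fent L Ds (Qs ! i) (Qs'!i)"
    using PQs by (simp add: Ps'_def Qs'_def)
  have lens: "length Ps' = length gs" "length Qs' = length gs" using PQs(1) by (auto simp: Ps'_def Qs'_def)
  have fr: "fresh ?\<Gamma>' xs" using TNew.hyps(8) TNew.prems(1) by (simp add: fresh_def)
  have T: "tyj L Ds ?\<Gamma>' (ENew c es) (CN c)
      (conjs L (fhas L Result (CN c) #
         map (\<lambda>i. fand L (fren L (subst1 Result (xs ! i)) (Ps' ! i))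
                    (fimp L (fren L (subst1 This Result) (pre (mspec (gs ! i))))
                            (fget L Result (mnm (gs ! i)) (xs ! i)))) [0..<length gs]))
      (conjs L (Qs' @ map (\<lambda>g. fren L (subst1 This Result) (pre (mspec g))) gs))"
    by (rule tyj.TNew[OF TNew.hyps(1,2,3,4) lens TNew.hyps(7)]) (use es' fr in auto)
  have E1: "fent L Ds (conjs L (fhas L Result (CN c) #
         map (\<lambda>i. fand L (fren L (subst1 Result (xs ! i)) (Ps' ! i))
                    (fimp L (fren L (subst1 This Result) (pre (mspec (gs ! i))))
                            (fget L Result (mnm (gs ! i)) (xs ! i)))) [0..<length gs]))
      (conjs L (fhas L Result (CN c) #
         map (\<lambda>i. fand L (fren L (subst1 Result (xs ! i)) (Ps ! i))
                    (fimp L (fren L (subst1 This Result) (pre (mspec (gs ! i))))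
                            (fget L Result (mnm (gs ! i)) (xs ! i)))) [0..<length gs]))"
    apply (rule conjs_mono[OF logic])
    apply (simp add: list_all2_map1 list_all2_map2 list_all2_same ent_ren[OF logic] es'
        ent_refl[OF logic] ent_and_mono[OF logic])
    done
  have E2: "fent L Ds (conjs L (Qs @ map (\<lambda>g. fren L (subst1 This Result) (pre (mspec g))) gs))
      (conjs L (Qs' @ map (\<lambda>g. fren L (subst1 This Result) (pre (mspec g))) gs))"
    apply (rule conjs_mono[OF logic])
    apply (intro list_all2_appendI)
     apply (simp add: list_all2_conv_all_nth lens TNew.hyps(6) es')
    apply (simp add: list_all2_same ent_refl[OF logic])
    done
  show ?case using T E1 E2 by auto
qed

lemma meth_transfer:
  assumes ok: "meth_ok L Ds (TN t) M"
  shows "meth_ok L Ds (CN C) M"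
proof (cases "mimpl M")
  case None thus ?thesis by (simp add: meth_ok_def)
next
  case (Some e)
  define h where "h = mhdr M"
  define rest where "rest = map (\<lambda>(c, x). (Var x, CN c)) (hparams h)"
  have G: "gamma_of (TN t) h = (This, TN t) # rest" "gamma_of (CN C) h = (This, CN C) # rest"
    by (simp_all add: gamma_of_def rest_def)
  have nr: "TN t \<notin> snd ` set rest" by (auto simp: rest_def)
  from ok Some obtain P Q where
    ty: "tyj L Ds ((This, TN t) # rest) e (CN (hret h)) P Q" and
    ver: "fver L Ds (fand L (conjs L (map (\<lambda>(x, n). fhas L x n) ((This, TN t) # rest))) (fand L (pre (hspec h)) P))
                    (fand L Q (post (hspec h)))"
    unfolding meth_ok_def Let_def G(1)[symmetric] h_def by auto
  obtain P' Q' where ty': "tyj L Ds ((This, CN C) # rest) e (CN (hret h)) P' Q'"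
    and e1: "fent L Ds P' P" and e2: "fent L Ds Q Q'"
    using tyj_transfer[OF ty refl nr] by auto
  have A: "fent L Ds (fand L (conjs L (map (\<lambda>(x, n). fhas L x n) ((This, CN C) # rest))) (fand L (pre (hspec h)) P'))
     (fand L (conjs L (map (\<lambda>(x, n). fhas L x n) ((This, TN t) # rest))) (fand L (pre (hspec h)) P))"
    apply (rule ent_and_mono[OF logic])
     apply (rule conjs_mono[OF logic])
     apply (simp add: ent_refines[OF logic ref] list_all2_same ent_refl[OF logic])
    apply (rule ent_and_mono[OF logic ent_refl[OF logic] e1])
    done
  have B: "fent L Ds (fand L Q (post (hspec h))) (fand L Q' (post (hspec h)))"
    by (rule ent_and_mono[OF logic e2 ent_refl[OF logic]])
  have "fver L Ds (fand L (conjs L (map (\<lambda>(x, n). fhas L x n) ((This, CN C) # rest))) (fand L (pre (hspec h)) P'))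
                    (fand L Q' (post (hspec h)))"
    by (rule ver_mono[OF logic ver A B])
  thus ?thesis using ty' Some unfolding meth_ok_def Let_def G(2)[symmetric] h_def by auto
qed

end


theorem theorem4p9:
  fixes L :: "'f logic" and Ds Ds' :: "'f prog"
    and t0 :: tname and MH :: "'f mheader" and ts :: "tname list" and Mss :: "'f meth list list"
    and C :: cname and B :: "'f body"
  assumes logic: "trait_logic L"
    and wf: "wf_prog Ds"
    and len: "length Mss = length ts"
    and D_t0: "map_of Ds (TN t0) = Some (TBody (Body False [] [Meth MH None]))"
    and D_ts: "\<forall>i<length ts. map_of Ds (TN (ts ! i)) = Some (TBody (Body False [] (Mss ! i)))"
    and D_C: "map_of Ds (CN C) = Some (foldl TPlus (TRef t0) (map TRef ts))"
    and flat: "flattens L Ds Ds'"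
    and F_t0: "map_of Ds' (TN t0) = Some (TBody (Body False [] [Meth MH None]))"
    and F_ts: "\<forall>i<length ts. map_of Ds' (TN (ts ! i)) = Some (TBody (Body False [] (Mss ! i)))"
    and F_C: "map_of Ds' (CN C) = Some (TBody B)"
    and ok_t0: "body_ok L Ds' (TN t0) (Body False [] [Meth MH None])"
    and ok_ts: "\<forall>i<length ts. body_ok L Ds' (TN (ts ! i)) (Body False [] (Mss ! i))"
  shows "body_ok L Ds' (CN C) B"
proof -
  have dDs: "distinct (map fst Ds)" using wf by (simp add: wf_prog_def)
  have la: "list_all2 (flat_decl L Ds') Ds Ds'" using flat by (simp add: flattens_def)
  have mf: "map fst Ds' = map fst Ds"
    using la by (induction rule: list_all2_induct) (auto simp: flat_decl_def)
  have dDs': "distinct (map fst Ds')" using dDs mf by simp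
  have inC: "(CN C, foldl TPlus (TRef t0) (map TRef ts)) \<in> set Ds" using D_C by (rule map_of_SomeD)
  obtain D' where D': "D' \<in> set Ds'" "flat_decl L Ds' (CN C, foldl TPlus (TRef t0) (map TRef ts)) D'"
    using la_ex[OF la inC] by blast
  then obtain B0 where B0: "fst D' = CN C" "flat_e L Ds' (CN C) (foldl TPlus (TRef t0) (map TRef ts)) = Some B0"
    "snd D' = TBody B0" by (auto simp: flat_decl_def)
  have "map_of Ds' (CN C) = Some (TBody B0)"
    using D'(1) B0(1,3) dDs' by (metis map_of_eq_Some_iff prod.collapse)
  hence BB0: "B0 = B" using F_C by simp
  have trait: "body_of Ds' (TN x) = Some (Body False [] (methods_of Ds' (TN x)))
      \<and> distinct (map mnm (methods_of Ds' (TN x)))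
      \<and> body_ok L Ds' (TN x) (Body False [] (methods_of Ds' (TN x)))" if x: "x \<in> set (t0 # ts)" for x
  proof -
    obtain Ms where Ms: "map_of Ds (TN x) = Some (TBody (Body False [] Ms))"
       "map_of Ds' (TN x) = Some (TBody (Body False [] Ms))"
       "body_ok L Ds' (TN x) (Body False [] Ms)"
    proof (cases "x = t0")
      case True thus ?thesis using that D_t0 F_t0 ok_t0 by blast
    next
      case False
      then obtain i where "i < length ts" "x = ts ! i" using x by (auto simp: in_set_conv_nth)
      thus ?thesis using that D_ts F_ts ok_ts by blast
    qed
    have "(TN x, TBody (Body False [] Ms)) \<in> set Ds" using Ms(1) by (rule map_of_SomeD)
    hence d: "distinct (map mnm Ms)" using wf unfolding wf_prog_def by fastforce
    have "body_of Ds' (TN x) = Some (Body False [] Ms)" using Ms(2) by (simp add: body_of_def)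
    thus ?thesis using d Ms(3) by (simp add: methods_of_def)
  qed
  have inv: "\<not> bintf B \<and> bintfs B = [] \<and> distinct (map mnm (bmeths B))
    \<and> set (bmeths B) \<subseteq> (\<Union>x\<in>set (t0#ts). set (methods_of Ds' (TN x)))
    \<and> (\<forall>x\<in>set (t0#ts). \<forall>M\<in>set (methods_of Ds' (TN x)). \<exists>M'\<in>set (bmeths B).
          msig M' = msig M \<and> stronger L Ds' (mspec M') (mspec M))"
    using fold_inv[OF logic, of t0 ts Ds' "CN C" B] trait B0(2) BB0 by blast
  have bC: "body_of Ds' (CN C) = Some B" using F_C by (simp add: body_of_def)
  show ?thesis unfolding body_ok_def
  proof
    fix M assume M: "M \<in> set (bmeths B)"
    then obtain x where x: "x \<in> set (t0#ts)" "M \<in> set (methods_of Ds' (TN x))" using inv by blast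
    have tr: "body_of Ds' (TN x) = Some (Body False [] (methods_of Ds' (TN x)))"
      "body_ok L Ds' (TN x) (Body False [] (methods_of Ds' (TN x)))" using trait[OF x(1)] by auto
    have ok: "meth_ok L Ds' (TN x) M" using tr(2) x(2) by (simp add: body_ok_def)
    have ref: "refines L Ds' (CN C) (TN x)"
      unfolding refines_def
    proof (intro conjI ballI allI impI)
      fix M0 assume M0: "M0 \<in> set (methods_of Ds' (TN x))"
      then obtain M' where M': "M' \<in> set (bmeths B)" "msig M' = msig M0" "stronger L Ds' (mspec M') (mspec M0)"
        using inv x(1) by blast
      have "mlookup Ds' (CN C) (mnm M0) = Some M'"
        using find_distinct[of "bmeths B" M'] inv M'(1) msig_mnm[OF logic M'(2)]
        by (simp add: mlookup_def methods_of_def bC)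
      thus "\<exists>M'. mlookup Ds' (CN C) (mnm M0) = Some M' \<and> msig M' = msig M0 \<and>
          stronger L Ds' (mspec M') (mspec M0)" using M' by blast
    next
      fix N'' assume "direct_super Ds' (TN x) N''"
      hence False using tr(1) by (simp add: direct_super_def)
      thus "subtype Ds' (CN C) N''" ..
    qed
    show "meth_ok L Ds' (CN C) M" using meth_transfer[OF logic ref tr(1) ok] .
  qed
qed

end
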